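(* Let $G$ be a connected unicyclic graph with largest vertex degree $\Delta\ge3$ and let $\alpha\in[0,1)$. If $\Delta\ge4$, or $\Delta=3$ and $k(G)\ge4$, then \[ \rho(A_\alpha(G))<\alpha\Delta+2(1-\alpha)\sqrt{\Delta-1}\cos\frac{\pi}{2k(G)+1}. \]
   Context: $A_\alpha(G)=\alpha D(G)+(1-\alpha)A(G)$ ($D$ degree matrix, $A$ adjacency matrix), and $\rho(M)$ is the spectral radius of $M$. A unicyclic graph is a connected graph with exactly one cycle. If $C_r$ is the unique cycle of $G$ with vertices $v_1,\dots,v_r$, removing the edges of $C_r$ leaves a forest of $r$ trees $T_1,\dots,T_r$ rooted at $v_1,\dots,v_r$; the height $h(T_i)$ is the largest distance from $v_i$ to a vertex of $T_i$, and the height of $G$ is $k(G)=\max_{1\le i\le r}h(T_i)+1$. *)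

theory Defs
  imports Complex_Main "Jordan_Normal_Form.Spectral_Radius"
begin

definition graph :: "nat \<Rightarrow> (nat \<Rightarrow> nat \<Rightarrow> bool) \<Rightarrow> bool" where
  "graph n E \<longleftrightarrow> (\<forall>i j. E i j \<longrightarrow> i < n \<and> j < n \<and> i \<noteq> j \<and> E j i)"

definition deg :: "nat \<Rightarrow> (nat \<Rightarrow> nat \<Rightarrow> bool) \<Rightarrow> nat \<Rightarrow> nat" where
  "deg n E i = card {j. j < n \<and> E i j}"

definition max_deg :: "nat \<Rightarrow> (nat \<Rightarrow> nat \<Rightarrow> bool) \<Rightarrow> nat" where
  "max_deg n E = Max {deg n E i | i. i < n}"

definition walk_len :: "(nat \<Rightarrow> nat \<Rightarrow> bool) \<Rightarrow> nat \<Rightarrow> nat \<Rightarrow> nat \<Rightarrow> bool" where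
  "walk_len E u v m \<longleftrightarrow> (\<exists>xs. length xs = Suc m \<and> hd xs = u \<and> last xs = v \<and>
      (\<forall>i < m. E (xs ! i) (xs ! Suc i)))"

definition reachable :: "(nat \<Rightarrow> nat \<Rightarrow> bool) \<Rightarrow> nat \<Rightarrow> nat \<Rightarrow> bool" where
  "reachable E u v \<longleftrightarrow> (\<exists>m. walk_len E u v m)"

definition dist :: "(nat \<Rightarrow> nat \<Rightarrow> bool) \<Rightarrow> nat \<Rightarrow> nat \<Rightarrow> nat" where
  "dist E u v = (LEAST m. walk_len E u v m)"

definition connected_graph :: "nat \<Rightarrow> (nat \<Rightarrow> nat \<Rightarrow> bool) \<Rightarrow> bool" where
  "connected_graph n E \<longleftrightarrow> graph n E \<and> n > 0 \<and> (\<forall>u<n. \<forall>v<n. reachable E u v)"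

text \<open>A cycle, identified with its edge set (edges are 2-element vertex sets):
  distinct vertices x_0,...,x_{r-1}, r \<ge> 3, with x_i adjacent to x_{i+1 mod r}.\<close>
definition is_cycle :: "nat \<Rightarrow> (nat \<Rightarrow> nat \<Rightarrow> bool) \<Rightarrow> nat set set \<Rightarrow> bool" where
  "is_cycle n E C \<longleftrightarrow> (\<exists>xs. distinct xs \<and> length xs \<ge> 3 \<and> set xs \<subseteq> {0..<n} \<and>
      (\<forall>i < length xs. E (xs ! i) (xs ! ((i + 1) mod length xs))) \<and>
      C = {{xs ! i, xs ! ((i + 1) mod length xs)} | i. i < length xs})"

definition unicyclic :: "nat \<Rightarrow> (nat \<Rightarrow> nat \<Rightarrow> bool) \<Rightarrow> bool" where
  "unicyclic n E \<longleftrightarrow> connected_graph n E \<and> (\<exists>!C. is_cycle n E C)"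

definition the_cycle :: "nat \<Rightarrow> (nat \<Rightarrow> nat \<Rightarrow> bool) \<Rightarrow> nat set set" where
  "the_cycle n E = (THE C. is_cycle n E C)"

text \<open>Graph obtained by deleting the edges of the cycle: the forest of trees T_i.\<close>
definition forest_rel :: "nat \<Rightarrow> (nat \<Rightarrow> nat \<Rightarrow> bool) \<Rightarrow> nat \<Rightarrow> nat \<Rightarrow> bool" where
  "forest_rel n E = (\<lambda>x y. E x y \<and> {x, y} \<notin> the_cycle n E)"

text \<open>h(T_i) for the tree rooted at cycle vertex v: largest distance from v within T_i.\<close>
definition tree_height :: "nat \<Rightarrow> (nat \<Rightarrow> nat \<Rightarrow> bool) \<Rightarrow> nat \<Rightarrow> nat" where
  "tree_height n E v = Max {dist (forest_rel n E) v u | u. u < n \<and> reachable (forest_rel n E) v u}"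

text \<open>k(G) = max_i h(T_i) + 1.\<close>
definition height :: "nat \<Rightarrow> (nat \<Rightarrow> nat \<Rightarrow> bool) \<Rightarrow> nat" where
  "height n E = Max {tree_height n E v | v. v \<in> \<Union>(the_cycle n E)} + 1"

definition A_alpha :: "real \<Rightarrow> nat \<Rightarrow> (nat \<Rightarrow> nat \<Rightarrow> bool) \<Rightarrow> complex mat" where
  "A_alpha \<alpha> n E = mat n n (\<lambda>(i, j). complex_of_real
      (\<alpha> * (if i = j then real (deg n E i) else 0) + (1 - \<alpha>) * (if E i j then 1 else 0)))"

end

theory Submission
  imports Defs
begin


lemma walk_len_relpowp: "walk_len R u v m \<longleftrightarrow> (R ^^ m) u v"
proof (induction m arbitrary: v)
  case 0
  show ?case
  proof
    assume "walk_len R u v 0"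
    then obtain xs where "length xs = 1" "hd xs = u" "last xs = v"
      unfolding walk_len_def by auto
    then show "(R ^^ 0) u v"
      by (cases xs) auto
  next
    assume "(R ^^ 0) u v"
    hence "u = v" by simp
    thus "walk_len R u v 0" unfolding walk_len_def by (intro exI[of _ "[u]"]) auto
  qed
next
  case (Suc m)
  show ?case
  proof
    assume "walk_len R u v (Suc m)"
    then obtain xs where xs: "length xs = Suc (Suc m)" "hd xs = u" "last xs = v"
      "\<forall>i<Suc m. R (xs ! i) (xs ! Suc i)" unfolding walk_len_def by auto
    define ys where "ys = take (Suc m) xs"
    have "walk_len R u (xs ! m) m" unfolding walk_len_def
    proof (intro exI[of _ ys] conjI allI impI)
      show "length ys = Suc m" using xs unfolding ys_def by simp
      show "hd ys = u" using xs unfolding ys_def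
        by (cases xs) auto
      show "last ys = xs ! m" using xs unfolding ys_def
        by (subst last_conv_nth) auto
      fix i assume "i < m" thus "R (ys ! i) (ys ! Suc i)" using xs unfolding ys_def by simp
    qed
    hence "(R ^^ m) u (xs ! m)" using Suc.IH by simp
    moreover have "R (xs ! m) v" using xs last_conv_nth[of xs] by (cases xs) auto
    ultimately show "(R ^^ Suc m) u v" by (rule relpowp_Suc_I)
  next
    assume "(R ^^ Suc m) u v"
    then obtain w where w: "(R ^^ m) u w" "R w v" by (rule relpowp_Suc_E)
    then obtain xs where xs: "length xs = Suc m" "hd xs = u" "last xs = w"
      "\<forall>i<m. R (xs ! i) (xs ! Suc i)" using Suc.IH unfolding walk_len_def by auto
    show "walk_len R u v (Suc m)" unfolding walk_len_def
    proof (intro exI[of _ "xs @ [v]"] conjI allI impI)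
      show "length (xs @ [v]) = Suc (Suc m)" using xs by simp
      show "hd (xs @ [v]) = u" using xs by (cases xs) auto
      show "last (xs @ [v]) = v" by simp
      fix i assume i: "i < Suc m"
      show "R ((xs @ [v]) ! i) ((xs @ [v]) ! Suc i)"
      proof (cases "i < m")
        case True thus ?thesis using xs i by (simp add: nth_append)
      next
        case False hence "i = m" using i by simp
        moreover have "xs ! m = w" using xs last_conv_nth[of xs] by (cases xs) auto
        ultimately show ?thesis using xs w by (simp add: nth_append)
      qed
    qed
  qed
qed

lemma walk_segment:
  assumes "\<forall>i<m. R (xs ! i) (xs ! Suc i)" "a \<le> b" "b \<le> m"
  shows "(R ^^ (b - a)) (xs ! a) (xs ! b)"
  using assms(2,3)
proof (induction b)
  case 0 thus ?case by simp
next
  case (Suc b)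
  show ?case
  proof (cases "a = Suc b")
    case True thus ?thesis by simp
  next
    case False
    hence "a \<le> b" using Suc by simp
    hence "(R ^^ (b - a)) (xs ! a) (xs ! b)" using Suc by simp
    moreover have "R (xs ! b) (xs ! Suc b)" using assms(1) Suc by simp
    ultimately have "(R ^^ Suc (b - a)) (xs ! a) (xs ! Suc b)" by (rule relpowp_Suc_I)
    thus ?thesis using \<open>a \<le> b\<close> by (simp add: Suc_diff_le)
  qed
qed

lemma rtranclp_sym:
  assumes "\<And>a b. R a b \<Longrightarrow> R b a" "R\<^sup>*\<^sup>* a b"
  shows "R\<^sup>*\<^sup>* b a"
  using assms(2)
proof (induction rule: rtranclp_induct)
  case base thus ?case by simp
next
  case (step y z)
  thus ?case using assms(1) by (meson converse_rtranclp_into_rtranclp)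
qed

lemma cycle_from_walk:
  assumes G: "graph n E" and exy: "E x y"
    and W: "(\<lambda>a b. E a b \<and> {a, b} \<noteq> {x, y})\<^sup>*\<^sup>* y x"
  shows "\<exists>C'. is_cycle n E C' \<and> {x, y} \<in> C'"
proof -
  define R where "R = (\<lambda>a b. E a b \<and> {a, b} \<noteq> {x, y})"
  from W obtain m0 where "(R ^^ m0) y x" unfolding R_def rtranclp_power by blast
  define m where "m = (LEAST m. (R ^^ m) y x)"
  have Rm: "(R ^^ m) y x" unfolding m_def by (rule LeastI) fact
  have mmin: "m \<le> m'" if "(R ^^ m') y x" for m' unfolding m_def using that by (rule Least_le)
  from Rm obtain xs where xs: "length xs = Suc m" "hd xs = y" "last xs = x"
    "\<forall>i<m. R (xs ! i) (xs ! Suc i)" unfolding walk_len_relpowp[symmetric] walk_len_def by auto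
  have x0: "xs ! 0 = y" using xs by (cases xs) auto
  have xm: "xs ! m = x" using xs last_conv_nth[of xs] by (cases xs) auto
  have dist: "distinct xs"
  proof (rule ccontr)
    assume "\<not> distinct xs"
    then obtain i0 j0 where ij0: "i0 < length xs" "j0 < length xs" "i0 \<noteq> j0" "xs ! i0 = xs ! j0"
      unfolding distinct_conv_nth by blast
    obtain i j where ij: "i < j" "j < length xs" "xs ! i = xs ! j"
    proof (cases "i0 < j0")
      case True thus ?thesis using that ij0 by blast
    next
      case False hence "j0 < i0" using ij0 by simp
      thus ?thesis using that ij0 by metis
    qed
    have "(R ^^ (i - 0)) (xs ! 0) (xs ! i)" by (rule walk_segment[OF xs(4)]) (use ij xs in auto)
    moreover have "(R ^^ (m - j)) (xs ! j) (xs ! m)" by (rule walk_segment[OF xs(4)]) (use ij xs in auto)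
    ultimately have "(R ^^ (i + (m - j))) y x" using ij x0 xm
      by (simp add: relpowp_add relcompp.relcompI)
    hence "m \<le> i + (m - j)" by (rule mmin)
    thus False using ij xs by simp
  qed
  have Gs: "E a b \<Longrightarrow> a < n \<and> b < n \<and> a \<noteq> b \<and> E b a" for a b using G unfolding graph_def by blast
  have m2: "m \<ge> 2"
  proof (rule ccontr)
    assume "\<not> m \<ge> 2"
    hence "m = 0 \<or> m = 1" by auto
    thus False
    proof
      assume "m = 0" thus False using Rm Gs[OF exy] by simp
    next
      assume "m = 1" hence "R y x" using Rm by auto
      thus False unfolding R_def by (auto simp: insert_commute)
    qed
  qed
  define C' where "C' = {{xs ! i, xs ! ((i + 1) mod length xs)} | i. i < length xs}"
  have "is_cycle n E C'" unfolding is_cycle_def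
  proof (intro exI[of _ xs] conjI)
    show "distinct xs" by fact
    show "3 \<le> length xs" using xs m2 by simp
    show "set xs \<subseteq> {0..<n}"
    proof
      fix v assume "v \<in> set xs"
      then obtain i where i: "i < length xs" "xs ! i = v" unfolding in_set_conv_nth by blast
      show "v \<in> {0..<n}"
      proof (cases "i < m")
        case True thus ?thesis using xs(4) i Gs unfolding R_def by auto
      next
        case False hence "i = m" using i xs by simp
        thus ?thesis using i xm Gs[OF exy] by auto
      qed
    qed
    show "\<forall>i<length xs. E (xs ! i) (xs ! ((i + 1) mod length xs))"
    proof (intro allI impI)
      fix i assume i: "i < length xs"
      show "E (xs ! i) (xs ! ((i + 1) mod length xs))"
      proof (cases "i < m")
        case True thus ?thesis using xs i unfolding R_def by auto
      next
        case False hence "i = m" using i xs by simp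
        thus ?thesis using xm x0 xs exy by simp
      qed
    qed
  qed (simp add: C'_def)
  moreover have "{x, y} \<in> C'" unfolding C'_def
    by (rule CollectI, rule exI[of _ m]) (use xs xm x0 in simp)
  ultimately show ?thesis by blast
qed



definition dep :: "nat \<Rightarrow> (nat \<Rightarrow> nat \<Rightarrow> bool) \<Rightarrow> nat \<Rightarrow> nat" where
  "dep n E u = (LEAST m. \<exists>c \<in> \<Union>(the_cycle n E). (forest_rel n E ^^ m) c u)"

definition cyc_list :: "nat \<Rightarrow> (nat \<Rightarrow> nat \<Rightarrow> bool) \<Rightarrow> nat list \<Rightarrow> bool" where
  "cyc_list n E cs \<longleftrightarrow> distinct cs \<and> 3 \<le> length cs \<and> set cs \<subseteq> {0..<n} \<and>
      (\<forall>i < length cs. E (cs ! i) (cs ! ((i + 1) mod length cs))) \<and>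
      the_cycle n E = {{cs ! i, cs ! ((i + 1) mod length cs)} | i. i < length cs}"

lemma mod_pred_aux:
  fixes i p r :: nat
  assumes "i < r" "p = (i + 1) mod r"
  shows "i = (p + r - 1) mod r"
proof (cases "i + 1 < r")
  case True thus ?thesis using assms by simp
next
  case False hence "i + 1 = r" using assms by simp
  thus ?thesis using assms by simp
qed

context
  fixes n :: nat and E :: "nat \<Rightarrow> nat \<Rightarrow> bool"
  assumes U: "unicyclic n E"
begin

lemma G: "graph n E" using U unfolding unicyclic_def connected_graph_def by auto

lemma Es: "E a b \<Longrightarrow> a < n \<and> b < n \<and> a \<noteq> b \<and> E b a"
  using G unfolding graph_def by blast

lemma npos: "0 < n" using U unfolding unicyclic_def connected_graph_def by auto

lemma conn: "u < n \<Longrightarrow> v < n \<Longrightarrow> reachable E u v"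
  using U unfolding unicyclic_def connected_graph_def by auto

lemma ex1: "\<exists>!C. is_cycle n E C" using U unfolding unicyclic_def by simp

lemma cyc: "is_cycle n E (the_cycle n E)"
  unfolding the_cycle_def by (rule theI'[OF ex1])

lemma uniq: "is_cycle n E C' \<Longrightarrow> C' = the_cycle n E"
proof -
  assume h: "is_cycle n E C'"
  from ex1 obtain C0 where "\<And>C. is_cycle n E C \<Longrightarrow> C = C0" by blast
  thus ?thesis using h cyc by metis
qed

lemma ex_cyc_list: "\<exists>cs. cyc_list n E cs"
  using cyc unfolding is_cycle_def cyc_list_def by blast

lemma V_set: "cyc_list n E cs \<Longrightarrow> \<Union>(the_cycle n E) = set cs"
proof -
  assume cl: "cyc_list n E cs"
  let ?r = "length cs"
  have r: "?r \<ge> 3" using cl unfolding cyc_list_def by auto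
  have C: "the_cycle n E = {{cs ! i, cs ! ((i + 1) mod ?r)} | i. i < ?r}"
    using cl unfolding cyc_list_def by auto
  show ?thesis
  proof
    show "\<Union>(the_cycle n E) \<subseteq> set cs"
    proof
      fix a assume "a \<in> \<Union>(the_cycle n E)"
      then obtain i where "i < ?r" "a \<in> {cs ! i, cs ! ((i + 1) mod ?r)}" unfolding C by auto
      moreover have "(i + 1) mod ?r < ?r" by (rule mod_less_divisor) (use r in linarith)
      ultimately show "a \<in> set cs" by auto
    qed
  next
    show "set cs \<subseteq> \<Union>(the_cycle n E)"
    proof
      fix a assume "a \<in> set cs"
      then obtain i where i: "i < ?r" "cs ! i = a" unfolding in_set_conv_nth by blast
      hence "{cs ! i, cs ! ((i + 1) mod ?r)} \<in> the_cycle n E" unfolding C by blast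
      thus "a \<in> \<Union>(the_cycle n E)" using i by blast
    qed
  qed
qed

lemma V_lt: "a \<in> \<Union>(the_cycle n E) \<Longrightarrow> a < n"
proof -
  obtain cs where cl: "cyc_list n E cs" using ex_cyc_list by blast
  assume "a \<in> \<Union>(the_cycle n E)"
  hence "a \<in> set cs" using V_set[OF cl] by simp
  thus "a < n" using cl unfolding cyc_list_def by auto
qed

lemma V_fin: "finite (\<Union>(the_cycle n E))"
proof -
  obtain cs where cl: "cyc_list n E cs" using ex_cyc_list by blast
  show ?thesis using V_set[OF cl] by simp
qed

lemma cyc_walk:
  assumes a: "a \<in> \<Union>(the_cycle n E)" and b: "b \<in> \<Union>(the_cycle n E)"
  shows "(\<lambda>x y. E x y \<and> {x, y} \<in> the_cycle n E)\<^sup>*\<^sup>* a b"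
proof -
  obtain cs where cl: "cyc_list n E cs" using ex_cyc_list by blast
  let ?r = "length cs"
  let ?S = "\<lambda>x y. E x y \<and> {x, y} \<in> the_cycle n E"
  have r: "?r \<ge> 3" using cl unfolding cyc_list_def by auto
  have C: "the_cycle n E = {{cs ! i, cs ! ((i + 1) mod ?r)} | i. i < ?r}"
    using cl unfolding cyc_list_def by auto
  have Ecs: "\<forall>i < ?r. E (cs ! i) (cs ! ((i + 1) mod ?r))" using cl unfolding cyc_list_def by auto
  have "a \<in> set cs" "b \<in> set cs" using a b V_set[OF cl] by auto
  then obtain p q where p: "p < ?r" "cs ! p = a" and q: "q < ?r" "cs ! q = b"
    by (metis in_set_conv_nth)
  have step: "?S\<^sup>*\<^sup>* (cs ! p) (cs ! ((p + t) mod ?r))" for t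
  proof (induction t)
    case 0 thus ?case using p by simp
  next
    case (Suc t)
    define i where "i = (p + t) mod ?r"
    have i: "i < ?r" unfolding i_def by (rule mod_less_divisor) (use r in linarith)
    have ii: "(i + 1) mod ?r = (p + Suc t) mod ?r" unfolding i_def by (simp add: mod_Suc_eq)
    have "?S (cs ! i) (cs ! ((i + 1) mod ?r))" using Ecs i unfolding C by blast
    hence "?S (cs ! ((p + t) mod ?r)) (cs ! ((p + Suc t) mod ?r))" using ii unfolding i_def by simp
    thus ?case using Suc.IH by (rule rtranclp.rtrancl_into_rtrancl[rotated])
  qed
  have "p + (q + ?r - p) = q + ?r" using p by simp
  hence "(p + (q + ?r - p)) mod ?r = q" using q by simp
  thus ?thesis using step[of "q + ?r - p"] p q by simp
qed

abbreviation F where "F \<equiv> forest_rel n E"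
abbreviation V where "V \<equiv> \<Union>(the_cycle n E)"

lemma F_E: "F a b \<Longrightarrow> E a b" unfolding forest_rel_def by simp

lemma F_sym: "F a b \<Longrightarrow> F b a"
  unfolding forest_rel_def using Es by (auto simp: insert_commute)

lemma ex_root: "u < n \<Longrightarrow> \<exists>c\<in>V. \<exists>m. (F ^^ m) c u"
proof -
  assume u: "u < n"
  obtain cs where cl: "cyc_list n E cs" using ex_cyc_list by blast
  define c0 where "c0 = cs ! 0"
  have "0 < length cs" using cl unfolding cyc_list_def by linarith
  hence c0V: "c0 \<in> V" unfolding V_set[OF cl] c0_def by (rule nth_mem)
  have "c0 < n" using V_lt c0V by blast
  then obtain m where "walk_len E c0 u m" using conn u unfolding reachable_def by blast
  hence Em: "(E ^^ m) c0 u" by (simp add: walk_len_relpowp)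
  have "\<forall>u. (E ^^ m) c0 u \<longrightarrow> (\<exists>c\<in>V. \<exists>m. (F ^^ m) c u)"
  proof (induction m)
    case 0 show ?case
    proof (intro allI impI)
      fix v assume "(E ^^ 0) c0 v"
      hence "(F ^^ 0) c0 v" by simp
      thus "\<exists>c\<in>V. \<exists>m. (F ^^ m) c v" using c0V by blast
    qed
  next
    case (Suc m)
    show ?case
    proof (intro allI impI)
      fix v assume "(E ^^ Suc m) c0 v"
      then obtain w where w: "(E ^^ m) c0 w" "E w v" by (rule relpowp_Suc_E)
      then obtain c m' where c: "c \<in> V" "(F ^^ m') c w" using Suc.IH by blast
      show "\<exists>c\<in>V. \<exists>m. (F ^^ m) c v"
      proof (cases "{w, v} \<in> the_cycle n E")
        case True
        hence "v \<in> V" by blast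
        thus ?thesis by (intro bexI[of _ v] exI[of _ 0]) auto
      next
        case False
        hence "F w v" using w unfolding forest_rel_def by simp
        have "(F ^^ Suc m') c v" using c(2) \<open>F w v\<close> by (rule relpowp_Suc_I)
        thus ?thesis using c by blast
      qed
    qed
  qed
  thus ?thesis using Em by blast
qed

lemma dep_wit: "u < n \<Longrightarrow> \<exists>c\<in>V. (F ^^ dep n E u) c u"
  unfolding dep_def by (rule LeastI_ex) (use ex_root in blast)

lemma dep_le: "c \<in> V \<Longrightarrow> (F ^^ m) c u \<Longrightarrow> dep n E u \<le> m"
  unfolding dep_def by (rule Least_le) blast

lemma dep0: "u < n \<Longrightarrow> dep n E u = 0 \<longleftrightarrow> u \<in> V"
proof
  assume "u < n" "dep n E u = 0"
  then obtain c where "c \<in> V" "(F ^^ 0) c u" using dep_wit by metis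
  thus "u \<in> V" by simp
next
  assume "u \<in> V"
  hence "dep n E u \<le> 0" by (intro dep_le[of u]) auto
  thus "dep n E u = 0" by simp
qed

lemma dep_F: "F w u \<Longrightarrow> dep n E u \<le> Suc (dep n E w)"
proof -
  assume Fwu: "F w u"
  hence "w < n" using Es F_E by blast
  then obtain c where c: "c \<in> V" "(F ^^ dep n E w) c w" using dep_wit by blast
  have "(F ^^ Suc (dep n E w)) c u" using c(2) Fwu by (rule relpowp_Suc_I)
  thus ?thesis using c(1) by (rule dep_le[rotated])
qed

lemma dep_lt_height: "u < n \<Longrightarrow> dep n E u < height n E"
proof -
  assume u: "u < n"
  then obtain c where c: "c \<in> V" "(F ^^ dep n E u) c u" using dep_wit by blast
  have wl: "walk_len F c u (dep n E u)" using c by (simp add: walk_len_relpowp)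
  hence reach: "reachable F c u" unfolding reachable_def by blast
  have "walk_len F c u (dist F c u)" unfolding dist_def by (rule LeastI) (rule wl)
  hence "(F ^^ dist F c u) c u" unfolding walk_len_relpowp .
  hence "dep n E u \<le> dist F c u" using c(1) by (intro dep_le)
  also have "dist F c u \<le> tree_height n E c"
    unfolding tree_height_def
  proof (rule Max_ge)
    have "{dist F c u' |u'. u' < n \<and> reachable F c u'} \<subseteq> (\<lambda>u'. dist F c u') ` {..<n}" by auto
    thus "finite {dist F c u' |u'. u' < n \<and> reachable F c u'}" by (rule finite_subset) auto
    show "dist F c u \<in> {dist F c u' |u'. u' < n \<and> reachable F c u'}" using u reach by blast
  qed
  also have "tree_height n E c \<le> Max {tree_height n E v |v. v \<in> V}"
  proof (rule Max_ge)
    have "{tree_height n E v |v. v \<in> V} = tree_height n E ` V" by blast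
    thus "finite {tree_height n E v |v. v \<in> V}" using V_fin by simp
    show "tree_height n E c \<in> {tree_height n E v |v. v \<in> V}" using c by blast
  qed
  finally show ?thesis unfolding height_def by simp
qed

lemma path_avoid:
  assumes "c \<in> V"
  shows "(F ^^ m) c v \<Longrightarrow> m \<le> dep n E u \<Longrightarrow> v \<noteq> u \<Longrightarrow>
    (\<lambda>a b. F a b \<and> a \<noteq> u \<and> b \<noteq> u)\<^sup>*\<^sup>* c v"
proof (induction m arbitrary: v)
  case 0 thus ?case by simp
next
  case (Suc m)
  from Suc.prems(1) obtain w where w: "(F ^^ m) c w" "F w v" by (rule relpowp_Suc_E)
  have "w \<noteq> u"
  proof
    assume "w = u"
    hence "dep n E u \<le> m" using dep_le[OF assms] w by blast
    thus False using Suc.prems by simp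
  qed
  hence "(\<lambda>a b. F a b \<and> a \<noteq> u \<and> b \<noteq> u)\<^sup>*\<^sup>* c w" using Suc w by simp
  thus ?case using w \<open>w \<noteq> u\<close> Suc.prems(3) by (simp add: rtranclp.rtrancl_into_rtrancl)
qed

lemma no_two_low:
  assumes u: "u < n" and d: "1 \<le> dep n E u"
    and e1: "E u w1" and e2: "E u w2" and ne: "w1 \<noteq> w2"
    and d1: "dep n E w1 \<le> dep n E u" and d2: "dep n E w2 \<le> dep n E u"
  shows False
proof -
  define R where "R = (\<lambda>a b. E a b \<and> {a, b} \<noteq> {u, w1})"
  have uV: "u \<notin> V" using dep0[OF u] d by simp
  have Rsym: "R a b \<Longrightarrow> R b a" for a b unfolding R_def using Es by (auto simp: insert_commute)
  have QR: "(\<lambda>a b. F a b \<and> a \<noteq> u \<and> b \<noteq> u) a b \<Longrightarrow> R a b" for a b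
    unfolding R_def using F_E by (auto simp: doubleton_eq_iff)
  have SR: "E a b \<and> {a, b} \<in> the_cycle n E \<Longrightarrow> R a b" for a b
    unfolding R_def using uV by auto
  have w1n: "w1 < n" and w2n: "w2 < n" using Es e1 e2 by auto
  obtain c1 where c1: "c1 \<in> V" "(F ^^ dep n E w1) c1 w1" using dep_wit w1n by blast
  obtain c2 where c2: "c2 \<in> V" "(F ^^ dep n E w2) c2 w2" using dep_wit w2n by blast
  have "(\<lambda>a b. F a b \<and> a \<noteq> u \<and> b \<noteq> u)\<^sup>*\<^sup>* c1 w1"
    using path_avoid[OF c1(1) c1(2) d1] Es[OF e1] by simp
  hence r1: "R\<^sup>*\<^sup>* c1 w1" by (rule mono_rtranclp[rule_format, rotated]) (rule QR)
  have "(\<lambda>a b. F a b \<and> a \<noteq> u \<and> b \<noteq> u)\<^sup>*\<^sup>* c2 w2"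
    using path_avoid[OF c2(1) c2(2) d2] Es[OF e2] by simp
  hence r2: "R\<^sup>*\<^sup>* c2 w2" by (rule mono_rtranclp[rule_format, rotated]) (rule QR)
  have r12: "R\<^sup>*\<^sup>* c1 c2" using cyc_walk[OF c1(1) c2(1)]
    by (rule mono_rtranclp[rule_format, rotated]) (rule SR)
  have r3: "R w2 u" unfolding R_def using Es[OF e2] ne by (auto simp: doubleton_eq_iff)
  have "R\<^sup>*\<^sup>* w1 c1" using rtranclp_sym[OF Rsym r1] by blast
  also note r12
  also note r2
  also have "R\<^sup>*\<^sup>* w2 u" using r3 by blast
  finally have "R\<^sup>*\<^sup>* w1 u" .
  then obtain C' where "is_cycle n E C'" "{u, w1} \<in> C'"
    using cycle_from_walk[OF G e1] unfolding R_def by blast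
  hence "{u, w1} \<in> the_cycle n E" using uniq by blast
  hence "u \<in> V" by blast
  thus False using uV by blast
qed

lemma cyc_nbr_edge:
  assumes uV: "u \<in> V" and e: "E u w" and wV: "w \<in> V"
  shows "{u, w} \<in> the_cycle n E"
proof (rule ccontr)
  assume nC: "{u, w} \<notin> the_cycle n E"
  define R where "R = (\<lambda>a b. E a b \<and> {a, b} \<noteq> {u, w})"
  have "R\<^sup>*\<^sup>* w u" using cyc_walk[OF wV uV]
    by (rule mono_rtranclp[rule_format, rotated]) (use nC in \<open>auto simp: R_def\<close>)
  then obtain C' where "is_cycle n E C'" "{u, w} \<in> C'"
    using cycle_from_walk[OF G e] unfolding R_def by blast
  thus False using uniq nC by blast
qed

lemma cyc_nbrs_card:
  assumes uV: "u \<in> V"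
  shows "card {w. w < n \<and> E u w \<and> w \<in> V} \<le> 2"
proof -
  obtain cs where cl: "cyc_list n E cs" using ex_cyc_list by blast
  let ?r = "length cs"
  have C: "the_cycle n E = {{cs ! i, cs ! ((i + 1) mod ?r)} | i. i < ?r}"
    using cl unfolding cyc_list_def by auto
  have dist: "distinct cs" and r: "?r \<ge> 3" using cl unfolding cyc_list_def by auto
  have "u \<in> set cs" using uV V_set[OF cl] by auto
  then obtain p where p: "p < ?r" "cs ! p = u" by (metis in_set_conv_nth)
  have sub: "{w. w < n \<and> E u w \<and> w \<in> V} \<subseteq> {cs ! ((p + 1) mod ?r), cs ! ((p + ?r - 1) mod ?r)}"
  proof
    fix w assume "w \<in> {w. w < n \<and> E u w \<and> w \<in> V}"
    hence "{u, w} \<in> the_cycle n E" using cyc_nbr_edge uV by blast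
    then obtain i where i: "i < ?r" "{u, w} = {cs ! i, cs ! ((i + 1) mod ?r)}" unfolding C by blast
    have i1: "(i + 1) mod ?r < ?r" by (rule mod_less_divisor) (use r in linarith)
    from i(2) have "(u = cs ! i \<and> w = cs ! ((i + 1) mod ?r)) \<or> (u = cs ! ((i + 1) mod ?r) \<and> w = cs ! i)"
      by (auto simp: doubleton_eq_iff)
    thus "w \<in> {cs ! ((p + 1) mod ?r), cs ! ((p + ?r - 1) mod ?r)}"
    proof
      assume h: "u = cs ! i \<and> w = cs ! ((i + 1) mod ?r)"
      hence "p = i" using p i dist nth_eq_iff_index_eq by metis
      thus ?thesis using h by simp
    next
      assume h: "u = cs ! ((i + 1) mod ?r) \<and> w = cs ! i"
      hence "p = (i + 1) mod ?r" using p i1 dist nth_eq_iff_index_eq by metis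
      hence "i = (p + ?r - 1) mod ?r" using i(1) by (rule mod_pred_aux[rotated])
      thus ?thesis using h by simp
    qed
  qed
  have "card {w. w < n \<and> E u w \<and> w \<in> V} \<le> card {cs ! ((p + 1) mod ?r), cs ! ((p + ?r - 1) mod ?r)}"
    by (rule card_mono[OF _ sub]) simp
  also have "\<dots> \<le> 2" by (simp add: card_insert_if)
  finally show ?thesis .
qed

end



lemma cos_pi5_gt: "cos (pi / 5) > 3 / 4"
proof -
  define c where "c = cos (pi / 5)"
  have cpos: "c > 0" unfolding c_def by (rule cos_gt_zero) (use pi_gt_zero in linarith)+
  have "cos (3 * (pi / 5)) = 4 * c ^ 3 - 3 * c" unfolding c_def by (rule cos_treble_cos)
  moreover have "cos (2 * (pi / 5)) = 2 * c\<^sup>2 - 1" unfolding c_def by (rule cos_double_cos)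
  moreover have "3 * (pi / 5) = pi - 2 * (pi / 5)" by simp
  ultimately have "4 * c ^ 3 - 3 * c = - (2 * c\<^sup>2 - 1)" by (metis cos_pi_minus)
  hence "(c + 1) * (4 * c\<^sup>2 - 2 * c - 1) = 0" by (simp add: algebra_simps power2_eq_square power3_eq_cube)
  hence q: "4 * c\<^sup>2 = 2 * c + 1" using cpos by simp
  show ?thesis
  proof (rule ccontr)
    assume "\<not> ?thesis"
    hence "c \<le> 3 / 4" unfolding c_def by simp
    hence "4 * c\<^sup>2 \<le> 3 * c" using cpos by (simp add: power2_eq_square mult_right_mono)
    thus False using q \<open>c \<le> 3/4\<close> by linarith
  qed
qed

lemma cos_pi8_gt: "cos (pi / 8) > sqrt 2 - 1 / 2"
proof -
  define c where "c = cos (pi / 8)"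
  have cpos: "c > 0" unfolding c_def by (rule cos_gt_zero) (use pi_gt_zero in linarith)+
  have "cos (2 * (pi / 8)) = 2 * c\<^sup>2 - 1" unfolding c_def by (rule cos_double_cos)
  hence "2 * c\<^sup>2 - 1 = sqrt 2 / 2" using cos_45 by simp
  hence c2: "c\<^sup>2 = 1 / 2 + sqrt 2 / 4" by simp
  have s2: "(sqrt 2)\<^sup>2 = 2" by simp
  have s2g: "sqrt 2 > 7 / 5"
  proof -
    have "(7/5::real)\<^sup>2 < (sqrt 2)\<^sup>2" by (simp add: power2_eq_square)
    thus ?thesis by (rule power2_less_imp_less) simp
  qed
  have "(sqrt 2 - 1 / 2)\<^sup>2 = 9 / 4 - sqrt 2" by (simp add: power2_eq_square algebra_simps)
  also have "\<dots> < c\<^sup>2" using c2 s2g by simp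
  finally show ?thesis unfolding c_def[symmetric] by (rule power2_less_imp_less) (use cpos in simp)
qed

definition sD :: "nat \<Rightarrow> real" where "sD D = sqrt (real D - 1)"
definition thk :: "nat \<Rightarrow> real" where "thk k = pi / (2 * real k + 1)"

lemma sD_sq: "D \<ge> 1 \<Longrightarrow> (sD D)\<^sup>2 = real D - 1" unfolding sD_def by simp
lemma sD_pos: "D \<ge> 2 \<Longrightarrow> sD D > 0" unfolding sD_def by simp
lemma sD_ge1: "D \<ge> 2 \<Longrightarrow> sD D \<ge> 1" unfolding sD_def by simp

lemma thk_pos: "thk k > 0" unfolding thk_def by simp

lemma thk_le: "1 \<le> k \<Longrightarrow> thk k \<le> pi / 3"
  unfolding thk_def by (intro divide_left_mono) auto

lemma thk_le2: "2 \<le> k \<Longrightarrow> thk k \<le> pi / 5"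
  unfolding thk_def by (intro divide_left_mono) auto

lemma thk_le4: "4 \<le> k \<Longrightarrow> thk k \<le> pi / 8"
  unfolding thk_def by (intro divide_left_mono) auto

lemma thk_lt_half: "1 \<le> k \<Longrightarrow> thk k < pi / (2 * real k)"
  unfolding thk_def by (intro divide_strict_left_mono) auto

lemma root_margin:
  assumes "(4 \<le> D \<and> 2 \<le> k) \<or> (D = 3 \<and> 4 \<le> k)"
  shows "real D - 2 - 2 * sD D + 2 * cos (thk k) > 0"
proof -
  have c5: "cos (thk k) > 3 / 4" if "2 \<le> k"
  proof -
    have "cos (pi / 5) \<le> cos (thk k)"
      by (rule cos_monotone_0_pi_le) (use thk_pos[of k] thk_le2[OF that] in auto)
    thus ?thesis using cos_pi5_gt by linarith
  qed
  consider "5 \<le> D" "2 \<le> k" | "D = 4" "2 \<le> k" | "D = 3" "4 \<le> k" using assms by linarith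
  thus ?thesis
  proof cases
    case 1
    have "sD D \<ge> 2" unfolding sD_def using 1 by (simp add: real_le_rsqrt)
    moreover have sq: "(sD D)\<^sup>2 = real D - 1" using 1 by (intro sD_sq) simp
    ultimately have "1 * 1 \<le> (sD D - 1) * (sD D - 1)" by (intro mult_mono) auto
    moreover have "real D - 2 - 2 * sD D = (sD D - 1) * (sD D - 1) - 2"
      using sq by (simp add: power2_eq_square algebra_simps)
    ultimately have "real D - 2 - 2 * sD D \<ge> -1" by linarith
    thus ?thesis using c5[OF 1(2)] by linarith
  next
    case 2
    have "sD D = sqrt 3" unfolding sD_def using 2 by simp
    moreover have "sqrt 3 < 7 / 4"
    proof -
      have "(sqrt 3)\<^sup>2 < (7/4::real)\<^sup>2" by (simp add: power2_eq_square)
      thus ?thesis by (rule power2_less_imp_less) simp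
    qed
    ultimately show ?thesis using c5[OF 2(2)] 2 by simp
  next
    case 3
    have "sD D = sqrt 2" unfolding sD_def using 3 by simp
    moreover have "cos (pi / 8) \<le> cos (thk k)"
      by (rule cos_monotone_0_pi_le) (use thk_pos[of k] thk_le4[OF 3(2)] in auto)
    ultimately show ?thesis using cos_pi8_gt 3 by simp
  qed
qed

definition Phi :: "nat \<Rightarrow> nat \<Rightarrow> real \<Rightarrow> real" where
  "Phi D k b = 2 * sD D * cos (thk k) * sin (real k * b) - 2 * sin (real k * b)
     - ((real D - 2) / sD D) * sin ((real k - 1) * b)"

lemma Phi_theta:
  assumes "(4 \<le> D \<and> 2 \<le> k) \<or> (D = 3 \<and> 4 \<le> k)"
  shows "Phi D k (thk k) > 0"
proof -
  define c where "c = thk k / 2"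
  define y where "y = cos c"
  define s where "s = sD D"
  have D3: "D \<ge> 3" using assms by auto
  have spos: "s > 0" unfolding s_def using D3 by (intro sD_pos) simp
  have ssq: "s\<^sup>2 = real D - 1" unfolding s_def using D3 by (intro sD_sq) simp
  have cpos: "c > 0" unfolding c_def using thk_pos by simp
  have k1: "1 \<le> k" using assms by auto
  have cle: "c \<le> pi / 6" unfolding c_def using thk_le[OF k1] by linarith
  have ypos: "y > 0" unfolding y_def by (rule cos_gt_zero) (use cpos cle pi_gt_zero in linarith)+
  have k1: "real k * thk k = pi / 2 - c"
    unfolding c_def thk_def by (simp add: field_simps)
  have k2: "(real k - 1) * thk k = pi / 2 - 3 * c"
    unfolding c_def thk_def by (simp add: field_simps)
  have sk: "sin (real k * thk k) = y" unfolding k1 y_def by (simp add: sin_diff)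
  have sk1: "sin ((real k - 1) * thk k) = 4 * y ^ 3 - 3 * y"
    unfolding k2 y_def by (simp add: sin_diff cos_treble_cos)
  have ct: "cos (thk k) = 2 * y\<^sup>2 - 1"
    unfolding y_def by (metis c_def cos_double_cos mult_2 field_sum_of_halves)
  have m: "real D - 2 - 2 * s + 2 * cos (thk k) > 0" unfolding s_def using root_margin[OF assms] .
  have "Phi D k (thk k) * s = 2 * s\<^sup>2 * cos (thk k) * y - 2 * s * y - (real D - 2) * (4 * y ^ 3 - 3 * y)"
    unfolding Phi_def s_def[symmetric] sk sk1 using spos by (simp add: field_simps power2_eq_square)
  also have "\<dots> = y * (real D - 2 - 2 * s + 2 * cos (thk k))"
    unfolding ssq ct by (simp add: algebra_simps power2_eq_square power3_eq_cube)
  also have "\<dots> > 0" using ypos m by simp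
  finally show ?thesis using spos by (simp add: zero_less_mult_iff)
qed

lemma Phi_cont: "isCont (Phi D k) x"
  unfolding Phi_def by (intro continuous_intros)

lemma choose_beta:
  assumes "(4 \<le> D \<and> 2 \<le> k) \<or> (D = 3 \<and> 4 \<le> k)"
  shows "\<exists>b. thk k < b \<and> b < pi / (2 * real k) \<and> Phi D k b > 0"
proof -
  have "(Phi D k \<longlongrightarrow> Phi D k (thk k)) (at (thk k))" using Phi_cont isCont_def by blast
  hence "(Phi D k \<longlongrightarrow> Phi D k (thk k)) (at_right (thk k))"
    by (rule tendsto_within_subset) simp
  hence "eventually (\<lambda>b. 0 < Phi D k b) (at_right (thk k))"
    using Phi_theta[OF assms] by (rule order_tendstoD(1))
  then obtain b0 where b0: "b0 > thk k" "\<And>y. y > thk k \<Longrightarrow> y < b0 \<Longrightarrow> 0 < Phi D k y"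
    unfolding eventually_at_right_field by blast
  have k1: "1 \<le> k" using assms by auto
  define b where "b = (thk k + min b0 (pi / (2 * real k))) / 2"
  have "thk k < min b0 (pi / (2 * real k))" using b0 thk_lt_half[OF k1] by simp
  hence "thk k < b" "b < b0" "b < pi / (2 * real k)" unfolding b_def by auto
  thus ?thesis using b0(2) by blast
qed



lemma collatz_bound:
  fixes M :: "nat \<Rightarrow> nat \<Rightarrow> real" and x :: "nat \<Rightarrow> real" and lam :: real
  assumes n: "n > 0"
    and Mnn: "\<And>i j. i < n \<Longrightarrow> j < n \<Longrightarrow> 0 \<le> M i j"
    and xpos: "\<And>i. i < n \<Longrightarrow> 0 < x i"
    and ineq: "\<And>i. i < n \<Longrightarrow> (\<Sum>j<n. M i j * x j) < lam * x i"
  shows "spectral_radius (mat n n (\<lambda>(i,j). complex_of_real (M i j))) < lam"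
proof -
  define A where "A = mat n n (\<lambda>(i,j). complex_of_real (M i j))"
  have A: "A \<in> carrier_mat n n" unfolding A_def by auto
  from spectral_radius_mem_max(1)[OF A n] obtain ev where
    ev: "ev \<in> spectrum A" and sr: "spectral_radius A = norm ev" by auto
  from ev obtain v where v: "v \<in> carrier_vec n" "v \<noteq> 0\<^sub>v n" "A *\<^sub>v v = ev \<cdot>\<^sub>v v"
    unfolding spectrum_def eigenvalue_def eigenvector_def using A by auto
  define t where "t i = norm (v $ i) / x i" for i
  define T where "T = Max (t ` {..<n})"
  have fin: "finite (t ` {..<n})" and ne: "t ` {..<n} \<noteq> {}" using n by auto
  from Max_in[OF fin ne] obtain i0 where i0: "i0 < n" "t i0 = T" unfolding T_def by auto
  have tle: "t j \<le> T" if "j < n" for j unfolding T_def using that fin by auto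
  have vle: "norm (v $ j) \<le> T * x j" if "j < n" for j
    using tle[OF that] xpos[OF that] unfolding t_def by (simp add: divide_le_eq)
  from v(1,2) obtain j where j: "j < n" "v $ j \<noteq> 0"
    by (metis carrier_vecD eq_vecI index_zero_vec(1) index_zero_vec(2))
  have "0 < t j" unfolding t_def using j xpos[OF j(1)] by auto
  hence Tpos: "0 < T" using tle[OF j(1)] by auto
  have vi0: "norm (v $ i0) = T * x i0" using i0 xpos[OF i0(1)] unfolding t_def by auto
  hence vi0pos: "0 < norm (v $ i0)" using Tpos xpos[OF i0(1)] by auto
  have "(A *\<^sub>v v) $ i0 = (\<Sum>j<n. complex_of_real (M i0 j) * v $ j)"
    using i0 v(1) unfolding A_def
    by (auto simp: scalar_prod_def lessThan_atLeast0 intro!: sum.cong)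
  hence eq: "ev * v $ i0 = (\<Sum>j<n. complex_of_real (M i0 j) * v $ j)"
    using v(3) i0 v(1) by (metis carrier_vecD index_smult_vec(1))
  have "norm ev * norm (v $ i0) = norm (\<Sum>j<n. complex_of_real (M i0 j) * v $ j)"
    by (metis eq norm_mult)
  also have "\<dots> \<le> (\<Sum>j<n. norm (complex_of_real (M i0 j) * v $ j))" by (rule norm_sum)
  also have "\<dots> = (\<Sum>j<n. M i0 j * norm (v $ j))"
    by (intro sum.cong refl) (simp add: norm_mult Mnn i0)
  also have "\<dots> \<le> (\<Sum>j<n. M i0 j * (T * x j))"
    by (intro sum_mono mult_left_mono vle Mnn i0) auto
  also have "\<dots> = T * (\<Sum>j<n. M i0 j * x j)"
    by (simp add: sum_distrib_left algebra_simps)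
  also have "\<dots> < T * (lam * x i0)" using ineq[OF i0(1)] Tpos by simp
  also have "\<dots> = lam * norm (v $ i0)" using vi0 by simp
  finally have "norm ev < lam" using vi0pos by simp
  thus ?thesis using sr unfolding A_def by simp
qed

lemma sum_split_bound:
  fixes g :: "nat \<Rightarrow> real" and a D :: nat
  assumes fin: "finite N" and sub: "N0 \<subseteq> N" and ca: "card N0 \<le> a" and cD: "card N \<le> D"
    and gA: "\<And>w. w \<in> N0 \<Longrightarrow> g w \<le> A" and gB: "\<And>w. w \<in> N - N0 \<Longrightarrow> g w \<le> B"
    and B0: "0 \<le> B" and BA: "B \<le> A"
  shows "sum g N \<le> real a * (A - B) + real D * B"
proof -
  have fin0: "finite N0" using fin sub finite_subset by blast
  have c: "card N0 \<le> card N" using card_mono[OF fin sub] .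
  have "sum g N = sum g N0 + sum g (N - N0)" using sum.subset_diff[OF sub fin, of g] by linarith
  also have "\<dots> \<le> real (card N0) * A + real (card (N - N0)) * B"
    using sum_bounded_above[of N0 g A] sum_bounded_above[of "N - N0" g B] gA gB
    by (intro add_mono) auto
  also have "real (card (N - N0)) = real (card N) - real (card N0)"
    using card_Diff_subset[OF fin0 sub] c by simp
  also have "real (card N0) * A + (real (card N) - real (card N0)) * B
      = real (card N0) * (A - B) + real (card N) * B" by (simp add: algebra_simps)
  also have "\<dots> \<le> real a * (A - B) + real D * B"
    using ca cD B0 BA by (intro add_mono mult_right_mono) auto
  finally show ?thesis .
qed


lemma f_facts:
  fixes D k :: nat and b :: real
  assumes k1: "1 \<le> k" and D3: "3 \<le> D" and bth: "thk k < b" and bk: "b < pi / (2 * real k)"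
    and s_def: "s = sD D"
    and f_def: "f = (\<lambda>j::nat. sin (real (k - j) * b) / s ^ j)"
  shows "\<And>j. j < k \<Longrightarrow> 0 < f j"
    and "\<And>j. 0 \<le> f j"
    and "\<And>i j. i \<le> j \<Longrightarrow> f j \<le> f i"
    and "\<And>j. 1 \<le> j \<Longrightarrow> j < k \<Longrightarrow>
           f (j - 1) + (real D - 1) * f (j + 1) < 2 * s * cos (thk k) * f j"
proof -
  have spos: "0 < s" unfolding s_def using D3 by (intro sD_pos) simp
  have s1: "1 \<le> s" unfolding s_def using D3 by (intro sD_ge1) simp
  have ssq: "s\<^sup>2 = real D - 1" unfolding s_def using D3 by (intro sD_sq) simp
  have bpos: "0 < b" using thk_pos[of k] bth by linarith
  have kb: "real k * b < pi / 2"
  proof -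
    have "real k * b < real k * (pi / (2 * real k))" using bk k1 by (intro mult_strict_left_mono) auto
    also have "\<dots> = pi / 2" using k1 by simp
    finally show ?thesis .
  qed
  have rng: "0 \<le> real (k - j) * b \<and> real (k - j) * b < pi / 2" for j
  proof -
    have a: "real (k - j) * b \<le> real k * b" using bpos by (intro mult_right_mono) auto
    have c: "0 \<le> real (k - j) * b" using bpos by simp
    show ?thesis using a c kb by linarith
  qed
  show fpos: "0 < f j" if "j < k" for j
  proof -
    have p1: "0 < real (k - j) * b" using that bpos by simp
    have p2: "real (k - j) * b < pi" using rng[of j] pi_gt_zero by linarith
    have "0 < sin (real (k - j) * b)" by (rule sin_gt_zero[OF p1 p2])
    thus ?thesis unfolding f_def using spos by simp
  qed
  show fnn: "0 \<le> f j" for j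
  proof (cases "j < k")
    case True thus ?thesis using fpos[OF True] by simp
  next
    case False thus ?thesis unfolding f_def by simp
  qed
  show "f j \<le> f i" if "i \<le> j" for i j
  proof (cases "j < k")
    case False
    hence "f j = 0" unfolding f_def by simp
    thus ?thesis using fnn[of i] by simp
  next
    case True
    have q1: "-(pi/2) \<le> real (k - j) * b" using rng[of j] pi_gt_zero by linarith
    have q2: "real (k - j) * b \<le> real (k - i) * b" using that bpos by (intro mult_right_mono) auto
    have q3: "real (k - i) * b \<le> pi / 2" using rng[of i] by linarith
    have "sin (real (k - j) * b) \<le> sin (real (k - i) * b)" by (rule sin_monotone_2pi_le[OF q1 q2 q3])
    moreover have "s ^ i \<le> s ^ j" using that s1 by (rule power_increasing)
    moreover have "0 \<le> sin (real (k - i) * b)" using rng[of i] by (intro sin_ge_zero) auto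
    ultimately show ?thesis unfolding f_def using spos by (intro frac_le) auto
  qed
  show "f (j - 1) + (real D - 1) * f (j + 1) < 2 * s * cos (thk k) * f j"
    if j: "1 \<le> j" "j < k" for j
  proof -
    obtain i where i: "j = Suc i" using j by (cases j) auto
    define m where "m = k - Suc i"
    have m1: "1 \<le> m" using j i unfolding m_def by simp
    have e1: "real (k - i) * b = real m * b + b" using j i unfolding m_def by (simp add: algebra_simps of_nat_diff)
    have e2: "real (k - (Suc i + 1)) * b = real m * b - b" using j i m1 unfolding m_def by (simp add: algebra_simps of_nat_diff)
    have "sin (real (k - i) * b) + sin (real (k - (Suc i + 1)) * b) = 2 * sin (real m * b) * cos b"
      unfolding e1 e2 by (simp add: sin_add sin_diff)
    hence "f (j - 1) + (real D - 1) * f (j + 1) = 2 * s * cos b * f j"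
      unfolding f_def i m_def[symmetric] using spos ssq[symmetric]
      by (simp add: field_simps power2_eq_square)
    also have "\<dots> < 2 * s * cos (thk k) * f j"
    proof -
      have "1 * b \<le> real k * b" using k1 bpos by (intro mult_right_mono) auto
      hence bpi: "b \<le> pi" using kb pi_gt_zero by linarith
      have "cos b < cos (thk k)"
        using thk_pos[of k] bth bpi by (intro cos_monotone_0_pi) auto
      thus ?thesis using spos fpos[OF j(2)] by simp
    qed
    finally show ?thesis .
  qed
qed



theorem mainTheorem10:
  fixes n :: nat and E :: "nat \<Rightarrow> nat \<Rightarrow> bool" and \<alpha> :: real
  assumes "unicyclic n E"
    and "max_deg n E \<ge> 3"
    and "0 \<le> \<alpha>" and "\<alpha> < 1"
    and "max_deg n E \<ge> 4 \<or> (max_deg n E = 3 \<and> height n E \<ge> 4)"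
  shows "spectral_radius (A_alpha \<alpha> n E) <
    \<alpha> * real (max_deg n E) + 2 * (1 - \<alpha>) * sqrt (real (max_deg n E) - 1)
      * cos (pi / (2 * real (height n E) + 1))"
proof -
  note U = assms(1)
  define D where "D = max_deg n E"
  define k where "k = height n E"
  define V where "V = \<Union>(the_cycle n E)"
  define N where "N u = {j. j < n \<and> E u j}" for u
  have D3: "3 \<le> D" using assms(2) unfolding D_def .
  have n0: "0 < n" using npos[OF U] .
  have degN: "deg n E u = card (N u)" for u unfolding deg_def N_def ..
  have finN: "finite (N u)" for u unfolding N_def by simp
  have degset: "{deg n E i |i. i < n} = deg n E ` {..<n}" by auto
  have Dmax: "deg n E u \<le> D" if "u < n" for u
    unfolding D_def max_deg_def degset using that by (intro Max_ge) auto
  obtain v where v: "v < n" "deg n E v = D"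
  proof -
    have "D \<in> deg n E ` {..<n}" unfolding D_def max_deg_def degset using n0 by (intro Max_in) auto
    thus ?thesis using that by auto
  qed
  have dlt: "dep n E u < k" if "u < n" for u unfolding k_def using dep_lt_height[OF U that] .
  have k2: "2 \<le> k"
  proof (cases "dep n E v = 0")
    case False thus ?thesis using dlt[OF v(1)] by linarith
  next
    case True
    hence vV: "v \<in> V" using dep0[OF U v(1)] unfolding V_def by simp
    have "\<not> N v \<subseteq> {w. w < n \<and> E v w \<and> w \<in> V}"
    proof
      assume "N v \<subseteq> {w. w < n \<and> E v w \<and> w \<in> V}"
      hence "card (N v) \<le> card {w. w < n \<and> E v w \<and> w \<in> V}" by (intro card_mono) auto
      also have "\<dots> \<le> 2" using cyc_nbrs_card[OF U] vV unfolding V_def by blast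
      finally show False using v D3 degN by simp
    qed
    then obtain w where w: "w < n" "E v w" "w \<notin> V" unfolding N_def by auto
    hence "dep n E w \<noteq> 0" using dep0[OF U w(1)] unfolding V_def by simp
    thus ?thesis using dlt[OF w(1)] by linarith
  qed
  have kD: "(4 \<le> D \<and> 2 \<le> k) \<or> (D = 3 \<and> 4 \<le> k)"
    using assms(5) k2 unfolding D_def k_def by auto
  obtain b where b: "thk k < b" "b < pi / (2 * real k)" "Phi D k b > 0"
    using choose_beta[OF kD] by blast
  define s where "s = sD D"
  define f where "f = (\<lambda>j::nat. sin (real (k - j) * b) / s ^ j)"
  define \<mu> where "\<mu> = 2 * s * cos (thk k)"
  define lam where "lam = \<alpha> * real D + (1 - \<alpha>) * \<mu>"
  have k1: "1 \<le> k" using k2 by simp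
  note ff = f_facts[OF k1 D3 b(1) b(2) s_def f_def]
  have fpos: "j < k \<Longrightarrow> 0 < f j" for j by (rule ff(1))
  have fnn: "0 \<le> f j" for j by (rule ff(2))
  have fmono: "i \<le> j \<Longrightarrow> f j \<le> f i" for i j by (rule ff(3))
  have frec: "1 \<le> j \<Longrightarrow> j < k \<Longrightarrow> f (j - 1) + (real D - 1) * f (j + 1) < \<mu> * f j" for j
    unfolding \<mu>_def by (rule ff(4))
  have froot: "2 * f 0 + (real D - 2) * f 1 < \<mu> * f 0"
  proof -
    have "real (k - 1) = real k - 1" using k1 by simp
    thus ?thesis using b(3) unfolding Phi_def f_def \<mu>_def s_def by (simp add: field_simps)
  qed
  define M where "M i j = \<alpha> * (if i = j then real (deg n E i) else 0) + (1 - \<alpha>) * (if E i j then 1 else 0)" for i j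
  define x where "x u = f (dep n E u)" for u
  have A_eq: "A_alpha \<alpha> n E = mat n n (\<lambda>(i,j). complex_of_real (M i j))"
    unfolding A_alpha_def M_def ..
  have rowsum: "(\<Sum>j<n. M u j * x j) = \<alpha> * real (deg n E u) * x u + (1 - \<alpha>) * (\<Sum>w\<in>N u. x w)"
    if u: "u < n" for u
  proof -
    have "(\<Sum>j<n. M u j * x j) = (\<Sum>j<n. (if u = j then \<alpha> * real (deg n E u) * x u else 0))
        + (1 - \<alpha>) * (\<Sum>j<n. (if E u j then x j else 0))"
    proof -
      have "M u j * x j = (if u = j then \<alpha> * real (deg n E u) * x u else 0)
          + (1 - \<alpha>) * (if E u j then x j else 0)" for j
        unfolding M_def by (auto simp: algebra_simps)
      thus ?thesis by (simp only: sum.distrib sum_distrib_left)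
    qed
    also have "(\<Sum>j<n. (if u = j then \<alpha> * real (deg n E u) * x u else 0)) = \<alpha> * real (deg n E u) * x u"
      using u by simp
    also have "(\<Sum>j<n. (if E u j then x j else 0)) = (\<Sum>w\<in>N u. x w)"
      unfolding N_def by (simp add: sum.inter_filter[symmetric] lessThan_def)
    finally show ?thesis .
  qed
  have nbound: "(\<Sum>w\<in>N u. x w) < \<mu> * x u" if u: "u < n" for u
  proof (cases "dep n E u = 0")
    case True
    hence uV: "u \<in> V" using dep0[OF U u] unfolding V_def by simp
    have "(\<Sum>w\<in>N u. x w) \<le> real 2 * (f 0 - f 1) + real D * f 1"
    proof (rule sum_split_bound[OF finN, of "{w. w < n \<and> E u w \<and> w \<in> V}"])
      show "{w. w < n \<and> E u w \<and> w \<in> V} \<subseteq> N u" unfolding N_def by auto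
      show "card {w. w < n \<and> E u w \<and> w \<in> V} \<le> 2" using cyc_nbrs_card[OF U] uV unfolding V_def by blast
      show "card (N u) \<le> D" using Dmax[OF u] degN by simp
      show "x w \<le> f 0" if "w \<in> {w. w < n \<and> E u w \<and> w \<in> V}" for w
      proof -
        have "w < n" "w \<in> V" using that by auto
        hence "dep n E w = 0" using dep0[OF U] unfolding V_def by blast
        thus ?thesis unfolding x_def by simp
      qed
      show "x w \<le> f 1" if "w \<in> N u - {w. w < n \<and> E u w \<and> w \<in> V}" for w
      proof -
        have "w < n" "w \<notin> V" using that unfolding N_def by auto
        hence "dep n E w \<noteq> 0" using dep0[OF U] unfolding V_def by simp
        thus ?thesis unfolding x_def by (intro fmono) simp
      qed
      show "0 \<le> f 1" by (rule fnn)
      show "f 1 \<le> f 0" by (rule fmono) simp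
    qed
    also have "\<dots> = 2 * f 0 + (real D - 2) * f 1" by (simp add: algebra_simps)
    also have "\<dots> < \<mu> * f 0" by (rule froot)
    finally show ?thesis unfolding x_def using True by simp
  next
    case False
    define j where "j = dep n E u"
    have j1: "1 \<le> j" using False unfolding j_def by simp
    have jk: "j < k" unfolding j_def by (rule dlt[OF u])
    have uV: "u \<notin> V" using dep0[OF U u] False unfolding V_def by simp
    let ?N0 = "{w \<in> N u. dep n E w \<le> j}"
    have "(\<Sum>w\<in>N u. x w) \<le> real 1 * (f (j - 1) - f (j + 1)) + real D * f (j + 1)"
    proof (rule sum_split_bound[OF finN, of ?N0])
      show "?N0 \<subseteq> N u" by auto
      have "\<forall>a\<in>?N0. \<forall>c\<in>?N0. a = c"
        using no_two_low[OF U u j1[unfolded j_def]] unfolding N_def j_def by blast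
      thus "card ?N0 \<le> 1" using card_le_Suc0_iff_eq[of ?N0] finN[of u] by simp
      show "card (N u) \<le> D" using Dmax[OF u] degN by simp
      show "x w \<le> f (j - 1)" if "w \<in> ?N0" for w
      proof -
        have e: "E u w" "w < n" using that unfolding N_def by auto
        have "{u, w} \<notin> the_cycle n E" using uV unfolding V_def by blast
        hence "forest_rel n E u w" using e unfolding forest_rel_def by simp
        hence "forest_rel n E w u" by (rule F_sym[OF U])
        hence "dep n E u \<le> Suc (dep n E w)" by (rule dep_F[OF U])
        hence "j - 1 \<le> dep n E w" unfolding j_def by simp
        thus ?thesis unfolding x_def by (rule fmono)
      qed
      show "x w \<le> f (j + 1)" if "w \<in> N u - ?N0" for w
      proof -
        have "j + 1 \<le> dep n E w" using that by auto
        thus ?thesis unfolding x_def by (rule fmono)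
      qed
      show "0 \<le> f (j + 1)" by (rule fnn)
      show "f (j + 1) \<le> f (j - 1)" by (rule fmono) simp
    qed
    also have "\<dots> = f (j - 1) + (real D - 1) * f (j + 1)" by (simp add: algebra_simps)
    also have "\<dots> < \<mu> * f j" by (rule frec[OF j1 jk])
    finally show ?thesis unfolding x_def j_def .
  qed
  have "spectral_radius (mat n n (\<lambda>(i,j). complex_of_real (M i j))) < lam"
  proof (rule collatz_bound[OF n0])
    show "0 \<le> M i j" for i j unfolding M_def using assms(3,4) by auto
    show "0 < x i" if "i < n" for i unfolding x_def using fpos dlt[OF that] by blast
    show "(\<Sum>j<n. M i j * x j) < lam * x i" if i: "i < n" for i
    proof -
      have xi: "0 < x i" unfolding x_def using fpos dlt[OF i] by blast
      have "\<alpha> * real (deg n E i) * x i \<le> \<alpha> * real D * x i"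
        using assms(3) Dmax[OF i] xi by (intro mult_right_mono mult_left_mono) auto
      moreover have "(1 - \<alpha>) * (\<Sum>w\<in>N i. x w) < (1 - \<alpha>) * (\<mu> * x i)"
        using nbound[OF i] assms(4) by (intro mult_strict_left_mono) auto
      ultimately show ?thesis unfolding rowsum[OF i] lam_def by (simp add: algebra_simps)
    qed
  qed
  moreover have "lam = \<alpha> * real (max_deg n E) + 2 * (1 - \<alpha>) * sqrt (real (max_deg n E) - 1)
      * cos (pi / (2 * real (height n E) + 1))"
    unfolding lam_def \<mu>_def s_def sD_def thk_def D_def k_def by (simp add: algebra_simps)
  ultimately show ?thesis unfolding A_eq by simp
qed


end
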